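(* Let $r,s,t,a,b,c$ be real numbers with $t\neq0$, and let $M_{H,n}^{(3)}$, $M_{h,n}^{(3)}$ be the matrix sequences defined in the context. Then for all nonnegative integers $m,n$: (i) $M_{h,n}^{(3)}M_{h,m}^{(3)}=M_{h,m}^{(3)}M_{h,n}^{(3)}=M_{h,n+m}^{(3)}$; (ii) $M_{H,n}^{(3)}M_{H,m}^{(3)}=M_{H,m}^{(3)}M_{H,n}^{(3)}$; (iii) $M_{H,1}^{(3)}M_{h,n}^{(3)}=M_{H,n}^{(3)}M_{h,1}^{(3)}=M_{H,n+1}^{(3)}$; (iv) $M_{H,n}^{(3)}M_{h,1}^{(3)}=M_{h,1}^{(3)}M_{H,n}^{(3)}=M_{H,n+1}^{(3)}$; (v) $M_{h,n}^{(3)}M_{H,n+1}^{(3)}=M_{H,2n+1}^{(3)}$.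
   Context: The third-order Horadam matrix sequence is the sequence of $3\times3$ matrices defined by $M_{H,n+3}^{(3)}=rM_{H,n+2}^{(3)}+sM_{H,n+1}^{(3)}+tM_{H,n}^{(3)}$ ($n\ge0$) with $M_{H,0}^{(3)}=\begin{pmatrix} b & c-rb & ta\\ a & b-ra & c-rb-sa\\ \frac{1}{t}(c-rb-sa) & a-\frac{r}{t}(c-rb-sa) & \frac1t\big(-sc+(t+rs)b+(s^2-rt)a\big)\end{pmatrix}$, $M_{H,1}^{(3)}=\begin{pmatrix} c & sb+ta & tb\\ b & c-rb & ta\\ a & b-ra & c-rb-sa\end{pmatrix}$, $M_{H,2}^{(3)}=\begin{pmatrix} rc+sb+ta & sc+tb & tc\\ c & sb+ta & tb\\ b & c-rb & ta\end{pmatrix}$. The generalized Tribonacci matrix sequence satisfies the same recurrence with $M_{h,0}^{(3)}=I_3$, $M_{h,1}^{(3)}=\begin{pmatrix} r&s&t\\1&0&0\\0&1&0\end{pmatrix}$, $M_{h,2}^{(3)}=\begin{pmatrix} r^2+s&rs+t&rt\\ r&s&t\\ 1&0&0\end{pmatrix}$. *)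

theory Defs
  imports "HOL-Analysis.Analysis"
begin

fun MH :: "real \<Rightarrow> real \<Rightarrow> real \<Rightarrow> real \<Rightarrow> real \<Rightarrow> real \<Rightarrow> nat \<Rightarrow> real^3^3" where
  "MH r s t a b c 0 =
     vector [vector [b, c - r*b, t*a],
             vector [a, b - r*a, c - r*b - s*a],
             vector [(1/t)*(c - r*b - s*a), a - (r/t)*(c - r*b - s*a),
                     (1/t) * ((t + r* s)*b + (s^2 - r*t)*a - s*c)]]"
| "MH r s t a b c (Suc 0) =
     vector [vector [c, s*b + t*a, t*b],
             vector [b, c - r*b, t*a],
             vector [a, b - r*a, c - r*b - s*a]]"
| "MH r s t a b c (Suc (Suc 0)) =
     vector [vector [r*c + s*b + t*a, s*c + t*b, t*c],
             vector [c, s*b + t*a, t*b],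
             vector [b, c - r*b, t*a]]"
| "MH r s t a b c (Suc (Suc (Suc n))) =
     r *\<^sub>R MH r s t a b c (n + 2) + s *\<^sub>R MH r s t a b c (n + 1) + t *\<^sub>R MH r s t a b c n"

fun Mh :: "real \<Rightarrow> real \<Rightarrow> real \<Rightarrow> nat \<Rightarrow> real^3^3" where
  "Mh r s t 0 = mat 1"
| "Mh r s t (Suc 0) =
     vector [vector [r, s, t],
             vector [1, 0, 0],
             vector [0, 1, 0]]"
| "Mh r s t (Suc (Suc 0)) =
     vector [vector [r^2 + s, r* s + t, r*t],
             vector [r, s, t],
             vector [1, 0, 0]]"
| "Mh r s t (Suc (Suc (Suc n))) =
     r *\<^sub>R Mh r s t (n + 2) + s *\<^sub>R Mh r s t (n + 1) + t *\<^sub>R Mh r s t n"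

end

theory Submission
  imports Defs
begin

lemma mm_radd: "((A::real^'n^'m) + B) ** C = A ** C + B ** C"
  by (simp add: matrix_matrix_mult_def vec_eq_iff sum.distrib distrib_right)
lemma mm_ladd: "(C::real^'n^'m) ** (A + B) = C ** A + C ** B"
  by (simp add: matrix_matrix_mult_def vec_eq_iff sum.distrib distrib_left)
lemma mm_rscale: "((x::real) *\<^sub>R A) ** (C::real^'k^'n) = x *\<^sub>R (A ** C)"
  by (simp add: matrix_matrix_mult_def vec_eq_iff sum_distrib_left mult.assoc)
lemma mm_lscale: "(C::real^'n^'m) ** ((x::real) *\<^sub>R A) = x *\<^sub>R (C ** A)"
  by (simp add: matrix_matrix_mult_def vec_eq_iff sum_distrib_left algebra_simps)
lemma m3: "(A::real^3^3) = B \<longleftrightarrow> (\<forall>i j. A$i$j = B$i$j)" by (simp add: vec_eq_iff)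
lemmas cs = m3 forall_3 matrix_matrix_mult_def sum_3 mat_def

lemma h1: "Mh r s t 1 ** Mh r s t 1 = Mh r s t 2"
  by (simp add: cs numeral_2_eq_2 power2_eq_square)
lemma h2: "Mh r s t 2 ** Mh r s t 1 = Mh r s t 3"
  by (simp add: cs numeral_2_eq_2 numeral_3_eq_3 power2_eq_square algebra_simps)
lemma h2': "Mh r s t 1 ** Mh r s t 2 = Mh r s t 3"
  by (simp add: cs numeral_2_eq_2 numeral_3_eq_3 power2_eq_square algebra_simps)
lemma H1: "t \<noteq> 0 \<Longrightarrow> MH r s t a b c 0 ** Mh r s t 1 = MH r s t a b c 1"
  by (simp add: cs  power2_eq_square field_simps)
lemma H2: "MH r s t a b c 1 ** Mh r s t 1 = MH r s t a b c 2"
  by (simp add: cs numeral_2_eq_2 power2_eq_square algebra_simps)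
lemma HC: "t \<noteq> 0 \<Longrightarrow> MH r s t a b c 0 ** Mh r s t 1 = Mh r s t 1 ** MH r s t a b c 0"
  by (simp add: cs  power2_eq_square field_simps)

lemma Mh_rec: "Mh r s t (Suc (Suc (Suc n))) = r *\<^sub>R Mh r s t (Suc (Suc n)) + s *\<^sub>R Mh r s t (Suc n) + t *\<^sub>R Mh r s t n"
  by simp
lemma MH_rec: "MH r s t a b c (Suc (Suc (Suc n))) = r *\<^sub>R MH r s t a b c (Suc (Suc n)) + s *\<^sub>R MH r s t a b c (Suc n) + t *\<^sub>R MH r s t a b c n"
  by simp
declare Mh.simps(2-4)[simp del] MH.simps[simp del]

lemma Mh_succ_aux: "Mh r s t (Suc n) = Mh r s t n ** Mh r s t 1 \<and> Mh r s t (Suc (Suc n)) = Mh r s t (Suc n) ** Mh r s t 1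
   \<and> Mh r s t (Suc (Suc (Suc n))) = Mh r s t (Suc (Suc n)) ** Mh r s t 1"
proof (induction n)
  case 0
  have "Mh r s t 0 ** Mh r s t 1 = Mh r s t 1" by simp
  then show ?case using h1 h2 by (simp only: numeral_2_eq_2 numeral_3_eq_3 One_nat_def)
next
  case (Suc n)
  have "Mh r s t (Suc (Suc (Suc (Suc n)))) = r *\<^sub>R Mh r s t (Suc (Suc (Suc n))) + s *\<^sub>R Mh r s t (Suc (Suc n)) + t *\<^sub>R Mh r s t (Suc n)"
    by (rule Mh_rec)
  also have "\<dots> = (r *\<^sub>R Mh r s t (Suc (Suc n)) + s *\<^sub>R Mh r s t (Suc n) + t *\<^sub>R Mh r s t n) ** Mh r s t 1"
    using Suc.IH by (simp only: mm_radd mm_rscale)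
  also have "\<dots> = Mh r s t (Suc (Suc (Suc n))) ** Mh r s t 1"
    by (simp only: Mh_rec)
  finally show ?case using Suc.IH by simp
qed

lemma Mh_succ: "Mh r s t (Suc n) = Mh r s t n ** Mh r s t 1"
  using Mh_succ_aux by blast

lemma Mh_add: "Mh r s t n ** Mh r s t m = Mh r s t (n + m)"
proof (induction m)
  case 0
  then show ?case by (simp only: Mh.simps(1) matrix_mul_rid add_0_right)
next
  case (Suc m)
  have "Mh r s t n ** Mh r s t (Suc m) = (Mh r s t n ** Mh r s t m) ** Mh r s t 1"
    by (simp only: Mh_succ[of r s t m] matrix_mul_assoc)
  also have "\<dots> = Mh r s t (Suc (n + m))"
    by (simp only: Suc.IH Mh_succ[of r s t "n+m"])
  finally show ?case by (simp only: add_Suc_right)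
qed

lemma MH_eq_aux:
  assumes "t \<noteq> 0"
  shows "MH r s t a b c n = MH r s t a b c 0 ** Mh r s t n \<and> MH r s t a b c (Suc n) = MH r s t a b c 0 ** Mh r s t (Suc n)
   \<and> MH r s t a b c (Suc (Suc n)) = MH r s t a b c 0 ** Mh r s t (Suc (Suc n))"
proof (induction n)
  case 0
  have "MH r s t a b c 0 ** Mh r s t 2 = MH r s t a b c 0 ** (Mh r s t 1 ** Mh r s t 1)"
    by (simp only: h1)
  also have "\<dots> = (MH r s t a b c 0 ** Mh r s t 1) ** Mh r s t 1"
    by (simp add: matrix_mul_assoc)
  also have "\<dots> = MH r s t a b c 2" using H1[OF assms] H2 by simp
  finally have "MH r s t a b c 0 ** Mh r s t 2 = MH r s t a b c 2" .
  then show ?case using H1[OF assms] by (simp add: numeral_2_eq_2 Mh.simps(1))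
next
  case (Suc n)
  have "MH r s t a b c (Suc (Suc (Suc n))) = r *\<^sub>R MH r s t a b c (Suc (Suc n)) + s *\<^sub>R MH r s t a b c (Suc n) + t *\<^sub>R MH r s t a b c n"
    by (rule MH_rec)
  also have "\<dots> = MH r s t a b c 0 ** (r *\<^sub>R Mh r s t (Suc (Suc n)) + s *\<^sub>R Mh r s t (Suc n) + t *\<^sub>R Mh r s t n)"
    using Suc.IH by (simp only: mm_ladd mm_lscale)
  also have "\<dots> = MH r s t a b c 0 ** Mh r s t (Suc (Suc (Suc n)))"
    by (simp only: Mh_rec)
  finally show ?case using Suc.IH by simp
qed

lemma MH_eq: "t \<noteq> 0 \<Longrightarrow> MH r s t a b c n = MH r s t a b c 0 ** Mh r s t n"
  using MH_eq_aux by blast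

lemma MH0_comm: "t \<noteq> 0 \<Longrightarrow> MH r s t a b c 0 ** Mh r s t n = Mh r s t n ** MH r s t a b c 0"
proof (induction n)
  case 0
  then show ?case by simp
next
  case (Suc n)
  have "MH r s t a b c 0 ** Mh r s t (Suc n) = (MH r s t a b c 0 ** Mh r s t n) ** Mh r s t 1"
    by (simp only: Mh_succ[of r s t n] matrix_mul_assoc)
  also have "\<dots> = Mh r s t n ** (MH r s t a b c 0 ** Mh r s t 1)"
    using Suc.IH Suc.prems by (simp add: matrix_mul_assoc)
  also have "\<dots> = Mh r s t n ** (Mh r s t 1 ** MH r s t a b c 0)"
    by (simp only: HC[OF Suc.prems])
  also have "\<dots> = Mh r s t (Suc n) ** MH r s t a b c 0"
    by (simp only: Mh_succ[of r s t n] matrix_mul_assoc)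
  finally show ?case .
qed

theorem lemma3p1:
  fixes r s t a b c :: real and m n :: nat
  assumes "t \<noteq> 0"
  shows "(Mh r s t n ** Mh r s t m = Mh r s t m ** Mh r s t n
          \<and> Mh r s t m ** Mh r s t n = Mh r s t (n + m))
       \<and> MH r s t a b c n ** MH r s t a b c m = MH r s t a b c m ** MH r s t a b c n
       \<and> (MH r s t a b c 1 ** Mh r s t n = MH r s t a b c n ** Mh r s t 1
          \<and> MH r s t a b c n ** Mh r s t 1 = MH r s t a b c (n + 1))
       \<and> (MH r s t a b c n ** Mh r s t 1 = Mh r s t 1 ** MH r s t a b c n
          \<and> Mh r s t 1 ** MH r s t a b c n = MH r s t a b c (n + 1))
       \<and> Mh r s t n ** MH r s t a b c (n + 1) = MH r s t a b c (2 * n + 1)"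
proof -
  define H where "H = MH r s t a b c 0"
  have E: "\<And>k. MH r s t a b c k = H ** Mh r s t k" using MH_eq[OF assms] H_def by blast
  have C: "\<And>k. H ** Mh r s t k = Mh r s t k ** H" using MH0_comm[OF assms] H_def by blast
  have c1: "Mh r s t n ** Mh r s t m = Mh r s t m ** Mh r s t n"
    by (simp add: Mh_add add.commute)
  have c2: "Mh r s t m ** Mh r s t n = Mh r s t (n + m)"
    by (simp add: Mh_add add.commute)
  have G: "\<And>k l. MH r s t a b c k ** MH r s t a b c l = H ** H ** Mh r s t (k + l)"
  proof -
    fix k l
    have "MH r s t a b c k ** MH r s t a b c l = H ** (Mh r s t k ** H) ** Mh r s t l"
      by (simp add: E matrix_mul_assoc)
    also have "\<dots> = H ** (H ** Mh r s t k) ** Mh r s t l" by (simp add: C)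
    also have "\<dots> = H ** H ** (Mh r s t k ** Mh r s t l)" by (simp add: matrix_mul_assoc)
    finally show "MH r s t a b c k ** MH r s t a b c l = H ** H ** Mh r s t (k + l)"
      by (simp add: Mh_add)
  qed
  have c3: "MH r s t a b c n ** MH r s t a b c m = MH r s t a b c m ** MH r s t a b c n"
    by (simp add: G add.commute)
  have c4: "MH r s t a b c 1 ** Mh r s t n = MH r s t a b c (n + 1)"
    by (simp add: E matrix_mul_assoc[symmetric] Mh_add add.commute)
  have c5: "MH r s t a b c n ** Mh r s t 1 = MH r s t a b c (n + 1)"
    by (simp add: E matrix_mul_assoc[symmetric] Mh_add)
  have c6: "Mh r s t 1 ** MH r s t a b c n = MH r s t a b c (n + 1)"
  proof -
    have "Mh r s t 1 ** MH r s t a b c n = (Mh r s t 1 ** H) ** Mh r s t n"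
      by (simp add: E matrix_mul_assoc)
    also have "\<dots> = H ** (Mh r s t 1 ** Mh r s t n)" by (simp add: C[symmetric] matrix_mul_assoc)
    finally show ?thesis by (simp add: E Mh_add add.commute)
  qed
  have c7: "Mh r s t n ** MH r s t a b c (n + 1) = MH r s t a b c (2 * n + 1)"
  proof -
    have "Mh r s t n ** MH r s t a b c (n + 1) = (Mh r s t n ** H) ** Mh r s t (n + 1)"
      by (simp add: E matrix_mul_assoc)
    also have "\<dots> = H ** (Mh r s t n ** Mh r s t (n + 1))" by (simp add: C[symmetric] matrix_mul_assoc)
    also have "\<dots> = H ** Mh r s t (2 * n + 1)" by (simp add: Mh_add mult_2)
    finally show ?thesis by (simp add: E)
  qed
  show ?thesis using c1 c2 c3 c4 c5 c6 c7 by simp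
qed

end
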